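(* Let $d \ge 1$, let $f: \mathbb{R}^d \to \mathbb{R}^d$ be differentiable, let ${\mathbf{x}}_0 \in \mathbb{R}^d$, and let $A = J_f({\mathbf{x}}_0)$ be the $d \times d$ Jacobian matrix of $f$ at ${\mathbf{x}}_0$. Assume $f$ is $L$-Lipschitz continuous with Lipschitz constant $L < 1$ (so that the spectral radius of $A$ satisfies $\rho(A) \le L < 1$). Then the quantity $$\mathcal{E}(A) := \mathrm{Tr}(A) - \log |\det(I + A)|$$ satisfies $$|\mathcal{E}(A)| \le d\big(-\log(1-L) - L\big).$$
   Context: $I$ denotes the $d\times d$ identity matrix, $\mathrm{Tr}$ the trace, and Lipschitz continuity is with respect to the Euclidean norm on $\mathbb{R}^d$. *)

theory Defs
  imports "HOL-Analysis.Analysis"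
begin

end

theory Submission
  imports Defs "HOL-Analysis.Analysis"
begin


lemma deriv_bound_lip:
  fixes f :: "real^'n \<Rightarrow> real^'n"
  assumes fd: "(f has_derivative D) (at x0)"
    and lip: "L-lipschitz_on UNIV f"
  shows "norm (D v) \<le> L * norm v"
proof -
  define g where "g = (\<lambda>t::real. f (x0 + t *\<^sub>R v))"
  have lin: "linear D" using fd has_derivative_linear by blast
  have "((\<lambda>t. x0 + t *\<^sub>R v) has_derivative (\<lambda>t. t *\<^sub>R v)) (at 0)"
    by (auto intro!: derivative_eq_intros)
  from has_derivative_compose[OF this] fd
  have gd: "(g has_derivative (\<lambda>t. D (t *\<^sub>R v))) (at 0)" unfolding g_def by simp
  have "(\<lambda>t. D (t *\<^sub>R v)) = (\<lambda>t. t *\<^sub>R D v)" using lin by (simp add: linear_scale)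
  with gd have gd': "(g has_derivative (\<lambda>t. t *\<^sub>R D v)) (at 0)" by simp
  then have "((\<lambda>y. (g y - g 0 - y *\<^sub>R D v) /\<^sub>R norm y) \<longlongrightarrow> 0) (at 0)"
    unfolding has_derivative_at_within by simp
  then have "((\<lambda>y. norm ((g y - g 0 - y *\<^sub>R D v) /\<^sub>R norm y)) \<longlongrightarrow> 0) (at 0)"
    using tendsto_norm_zero by force
  then have E: "((\<lambda>y. L * norm v + norm (g y - g 0 - y *\<^sub>R D v) / \<bar>y\<bar>) \<longlongrightarrow> L * norm v + 0) (at (0::real))"
    by (intro tendsto_add tendsto_const) (simp add: divide_inverse mult.commute)
  have key: "norm (D v) \<le> L * norm v + norm (g y - g 0 - y *\<^sub>R D v) / \<bar>y\<bar>" if y: "y \<noteq> 0" for y :: real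
  proof -
    have L0: "L \<ge> 0" using lip lipschitz_on_nonneg by blast
    have "norm (g y - g 0) \<le> L * norm ((x0 + y *\<^sub>R v) - (x0 + 0 *\<^sub>R v))"
      unfolding g_def by (rule lipschitz_on_normD[OF lip]) auto
    also have "\<dots> = L * (\<bar>y\<bar> * norm v)" by simp
    finally have a: "norm (g y - g 0) \<le> L * (\<bar>y\<bar> * norm v)" .
    have "\<bar>y\<bar> * norm (D v) = norm (y *\<^sub>R D v)" by simp
    also have "\<dots> \<le> norm (g y - g 0) + norm (g y - g 0 - y *\<^sub>R D v)"
      by (metis norm_triangle_ineq4 diff_diff_eq2 add.commute diff_add_cancel norm_minus_commute)
    finally have "\<bar>y\<bar> * norm (D v) \<le> \<bar>y\<bar> * (L * norm v) + norm (g y - g 0 - y *\<^sub>R D v)"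
      using a by (simp add: algebra_simps)
    then show "norm (D v) \<le> L * norm v + norm (g y - g 0 - y *\<^sub>R D v) / \<bar>y\<bar>"
      using y by (simp add: field_simps)
  qed
  have ev: "\<forall>\<^sub>F y in at (0::real). norm (D v) \<le> L * norm v + norm (g y - g 0 - y *\<^sub>R D v) / \<bar>y\<bar>"
    unfolding eventually_at_filter by (auto intro!: always_eventually key)
  show ?thesis using tendsto_lowerbound[OF E ev] by simp
qed



lemma mat1_entry: "(mat 1 + h *\<^sub>R B) $ i $ j = (if i = j then 1 else 0) + h * (B::real^'n^'n) $ i $ j"
  by (simp add: mat_def)

lemma prod_delta_zero:
  fixes p :: "'n::finite \<Rightarrow> 'n"
  assumes p: "p permutes UNIV" and np: "p \<noteq> id"
  shows "(\<Prod>j\<in>UNIV-{i}. (if j = p j then 1 else 0::real)) = 0"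
proof -
  obtain a where a: "p a \<noteq> a" using np by (metis eq_id_iff)
  have inj: "inj p" using p permutes_inj by blast
  show ?thesis
  proof (cases "i = a")
    case True
    have "p (p a) \<noteq> p a" using a inj by (metis injD)
    moreover have "p a \<in> UNIV - {i}" using True a by auto
    ultimately show ?thesis by (intro prod_zero) (auto intro!: bexI[of _ "p a"])
  next
    case False
    then have "a \<in> UNIV - {i}" by auto
    with a show ?thesis by (intro prod_zero) (auto intro!: bexI[of _ a])
  qed
qed

lemma det_deriv0:
  fixes B :: "real^'n^'n"
  shows "((\<lambda>h. det (mat 1 + h *\<^sub>R B)) has_real_derivative trace B) (at 0)"
proof -
  let ?D = "\<lambda>p. of_int (sign p) * (\<Sum>i\<in>UNIV. B $ i $ p i * (\<Prod>j\<in>UNIV-{i}. (if j = p j then 1 else 0::real)))"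
  have d: "((\<lambda>h. of_int (sign p) * (\<Prod>i\<in>UNIV. (mat 1 + h *\<^sub>R B) $ i $ p i)) has_real_derivative ?D p) (at 0)" for p
  proof -
    have "((\<lambda>h. (\<Prod>i\<in>UNIV. (if i = p i then 1 else 0) + h * B $ i $ p i)) has_real_derivative
       (\<Sum>i\<in>UNIV. B $ i $ p i * (\<Prod>j\<in>UNIV-{i}. (if j = p j then 1 else 0) + 0 * B $ j $ p j))) (at 0)"
      by (rule has_field_derivative_prod) (auto intro!: derivative_eq_intros)
    then show ?thesis unfolding mat1_entry by (auto intro!: DERIV_cmult)
  qed
  have "((\<lambda>h. det (mat 1 + h *\<^sub>R B)) has_real_derivative (\<Sum>p\<in>{p. p permutes UNIV}. ?D p)) (at 0)"
    unfolding det_def by (rule DERIV_sum) (rule d)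
  moreover have "(\<Sum>p\<in>{p. p permutes UNIV}. ?D p) = ?D id"
  proof -
    have "(\<Sum>p\<in>{p. p permutes UNIV}. ?D p) = ?D id + (\<Sum>p\<in>{p. p permutes UNIV} - {id}. ?D p)"
      by (rule sum.remove) (auto simp: permutes_id finite_permutations)
    moreover have "(\<Sum>p\<in>{p. p permutes UNIV} - {id}. ?D p) = 0"
      by (rule sum.neutral) (simp add: prod_delta_zero)
    ultimately show ?thesis by simp
  qed
  moreover have "?D id = trace B" by (simp add: trace_def)
  ultimately show ?thesis by simp
qed


lemma det_deriv:
  fixes A M N :: "real^'n^'n"
  assumes M: "M = mat 1 + t *\<^sub>R A" and NM: "M ** N = mat 1"
  shows "((\<lambda>s. det (mat 1 + s *\<^sub>R A)) has_real_derivative det M * trace (N ** A)) (at t)"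
proof -
  let ?B = "N ** A"
  have eq: "mat 1 + s *\<^sub>R A = M ** (mat 1 + (s - t) *\<^sub>R ?B)" for s
  proof -
    have "M ** (mat 1 + (s - t) *\<^sub>R ?B) = M + (s - t) *\<^sub>R (M ** ?B)"
      by (metis matrix_add_ldistrib matrix_mul_rid matrix_scalar_ac scalar_matrix_assoc)
    also have "M ** ?B = A" by (metis matrix_mul_assoc NM matrix_mul_lid)
    then have "M + (s - t) *\<^sub>R (M ** ?B) = M + (s - t) *\<^sub>R A" by simp
    also have "\<dots> = mat 1 + s *\<^sub>R A" by (simp add: M algebra_simps)
    finally show ?thesis by simp
  qed
  have g: "((\<lambda>s. s - t) has_real_derivative 1) (at t)"
    by (auto intro!: derivative_eq_intros)
  have f: "((\<lambda>h. det (mat 1 + h *\<^sub>R ?B)) has_real_derivative trace ?B) (at ((\<lambda>s. s - t) t))"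
    using det_deriv0[of ?B] by simp
  have "((\<lambda>s. det M * det (mat 1 + (s - t) *\<^sub>R ?B)) has_real_derivative det M * (trace ?B * 1)) (at t)"
    by (rule DERIV_cmult) (rule DERIV_chain2[OF f g])
  then show ?thesis by (simp add: eq det_mul)
qed

lemma lower_bound:
  fixes A :: "real^'n^'n"
  assumes bnd: "\<And>x. norm (A *v x) \<le> L * norm x"
  shows "(1 - \<bar>t\<bar> * L) * norm x \<le> norm ((mat 1 + t *\<^sub>R A) *v x)"
proof -
  have e: "(mat 1 + t *\<^sub>R A) *v x = x + t *\<^sub>R (A *v x)"
    by (simp add: matrix_vector_mult_add_rdistrib scaleR_matrix_vector_assoc)
  have "norm (t *\<^sub>R (A *v x)) \<le> \<bar>t\<bar> * (L * norm x)"
    using bnd[of x] by (simp add: mult_left_mono)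
  moreover have "norm x - norm (t *\<^sub>R (A *v x)) \<le> norm (x + t *\<^sub>R (A *v x))"
    by (metis norm_diff_ineq norm_minus_cancel diff_minus_eq_add)
  ultimately show ?thesis unfolding e by (simp add: algebra_simps)
qed

lemma inv_exists:
  fixes A :: "real^'n^'n"
  assumes bnd: "\<And>x. norm (A *v x) \<le> L * norm x" and tl: "\<bar>t\<bar> * L < 1"
  shows "\<exists>N. (mat 1 + t *\<^sub>R A) ** N = mat 1 \<and> N ** (mat 1 + t *\<^sub>R A) = mat 1"
proof -
  have "\<forall>x. (mat 1 + t *\<^sub>R A) *v x = 0 \<longrightarrow> x = 0"
  proof (intro allI impI)
    fix x assume "(mat 1 + t *\<^sub>R A) *v x = 0"
    with lower_bound[OF bnd, of t x] have "(1 - \<bar>t\<bar> * L) * norm x \<le> 0" by simp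
    with tl have "norm x \<le> 0" by (simp add: mult_le_0_iff)
    then show "x = 0" by simp
  qed
  then have "invertible (mat 1 + t *\<^sub>R A)"
    using matrix_left_invertible_ker invertible_left_inverse by blast
  then show ?thesis unfolding invertible_def by blast
qed

lemma trace_diff_bound:
  fixes A M N :: "real^'n^'n"
  assumes bnd: "\<And>x. norm (A *v x) \<le> L * norm x" and L0: "0 \<le> L"
    and t0: "0 \<le> t" and tl: "t * L < 1"
    and M: "M = mat 1 + t *\<^sub>R A" and NM: "M ** N = mat 1"
  shows "\<bar>trace A - trace (N ** A)\<bar> \<le> real CARD('n) * (t * L^2 / (1 - t * L))"
proof -
  have each: "\<bar>A$i$i - (N ** A)$i$i\<bar> \<le> t * L^2 / (1 - t * L)" for i
  proof -
    define e where "e = (axis i 1 :: real^'n)"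
    define w where "w = A *v e"
    define u where "u = N *v w"
    have wi: "A$i$i = w$i" unfolding w_def e_def matrix_vector_mult_basis by (simp add: column_def)
    have "u = (N ** A) *v axis i 1" by (simp add: u_def w_def e_def matrix_vector_mul_assoc)
    then have ui: "(N ** A)$i$i = u$i" by (simp add: matrix_vector_mult_basis column_def)
    have Mu: "M *v u = w" unfolding u_def matrix_vector_mul_assoc NM by simp
    have Mu2: "M *v u = u + t *\<^sub>R (A *v u)"
      unfolding M by (simp add: matrix_vector_mult_add_rdistrib scaleR_matrix_vector_assoc)
    have wu: "w - u = t *\<^sub>R (A *v u)" using Mu Mu2 by (metis add_diff_cancel_left')
    have nw: "norm w \<le> L" unfolding w_def e_def using bnd[of "axis i 1"] by simp
    have pos: "0 < 1 - t * L" using tl by simp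
    have "(1 - t * L) * norm u \<le> norm w" using lower_bound[OF bnd, of t u] Mu t0 M by simp
    then have nu: "norm u \<le> L / (1 - t * L)" using nw pos by (simp add: field_simps)
    have "\<bar>A$i$i - (N ** A)$i$i\<bar> = \<bar>(w - u)$i\<bar>" by (simp add: wi ui)
    also have "\<dots> \<le> norm (w - u)" by (rule component_le_norm_cart)
    also have "\<dots> = t * norm (A *v u)" using wu t0 by simp
    also have "\<dots> \<le> t * (L * norm u)" using bnd[of u] t0 by (simp add: mult_left_mono)
    also have "\<dots> \<le> t * (L * (L / (1 - t * L)))"
      by (intro mult_left_mono) (use nu L0 t0 in auto)
    also have "\<dots> = t * L^2 / (1 - t * L)" by (simp add: power2_eq_square)
    finally show ?thesis .
  qed
  have "trace A - trace (N ** A) = (\<Sum>i\<in>UNIV. A$i$i - (N ** A)$i$i)"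
    by (simp add: trace_def sum_subtractf)
  then have "\<bar>trace A - trace (N ** A)\<bar> \<le> (\<Sum>i\<in>UNIV. \<bar>A$i$i - (N ** A)$i$i\<bar>)"
    by (simp add: sum_abs)
  also have "\<dots> \<le> (\<Sum>i\<in>(UNIV::'n set). t * L^2 / (1 - t * L))"
    by (rule sum_mono) (rule each)
  also have "\<dots> = real CARD('n) * (t * L^2 / (1 - t * L))" by simp
  finally show ?thesis .
qed

theorem theorem1:
  fixes f :: "real^'n \<Rightarrow> real^'n" and x0 :: "real^'n" and L :: real
    and A :: "real^'n^'n"
  assumes diff: "\<And>x. f differentiable (at x)"
    and lip: "L-lipschitz_on UNIV f"
    and L1: "L < 1"
    and A_def: "A = jacobian f (at x0)"
  shows "\<bar>trace A - ln \<bar>det (mat 1 + A)\<bar>\<bar> \<le> real CARD('n) * (- ln (1 - L) - L)"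
proof -
  define D where "D = frechet_derivative f (at x0)"
  have fd: "(f has_derivative D) (at x0)" using diff[of x0] frechet_derivative_works D_def by blast
  have bl: "bounded_linear D" using fd has_derivative_bounded_linear by blast
  have Av: "A *v x = D x" for x
    using fun_cong[OF matrix_vector_mul(3)[OF bl], of x] by (simp add: A_def D_def jacobian_def)
  have bnd: "norm (A *v x) \<le> L * norm x" for x
    unfolding Av by (rule deriv_bound_lip[OF fd lip])
  have L0: "0 \<le> L" using lip lipschitz_on_nonneg by blast
  define d where "d = (\<lambda>s::real. det (mat 1 + s *\<^sub>R A))"
  have tl: "\<bar>t\<bar> * L < 1" if "t \<in> {0..1}" for t
  proof -
    have "\<bar>t\<bar> * L \<le> 1 * L" using that L0 by (intro mult_right_mono) auto
    then show ?thesis using L1 by simp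
  qed
  have dd: "\<exists>N. (mat 1 + t *\<^sub>R A) ** N = mat 1 \<and> N ** (mat 1 + t *\<^sub>R A) = mat 1 \<and>
      (d has_real_derivative det (mat 1 + t *\<^sub>R A) * trace (N ** A)) (at t)" if t: "t \<in> {0..1}" for t
  proof -
    obtain N where N: "(mat 1 + t *\<^sub>R A) ** N = mat 1" "N ** (mat 1 + t *\<^sub>R A) = mat 1"
      using inv_exists[OF bnd tl[OF t]] by blast
    show ?thesis using N det_deriv[OF refl N(1)] unfolding d_def by blast
  qed
  have dnz: "d t \<noteq> 0" if "t \<in> {0..1}" for t
  proof -
    have "invertible (mat 1 + t *\<^sub>R A)"
      using inv_exists[OF bnd tl[OF that]] unfolding invertible_def by blast
    then show ?thesis unfolding d_def invertible_det_nz .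
  qed
  have cont: "continuous_on {0..1} d"
    by (rule continuous_at_imp_continuous_on) (meson dd DERIV_isCont)
  have d0: "d 0 = 1" unfolding d_def by simp
  have dpos: "d t > 0" if tt: "t \<in> {0..1}" for t
  proof (rule ccontr)
    assume "\<not> d t > 0"
    then have "d t \<le> 0" by simp
    moreover have "continuous_on {0..t} d" using that by (intro continuous_on_subset[OF cont]) auto
    ultimately obtain x where "0 \<le> x" "x \<le> t" "d x = 0"
      using IVT2'[of d t 0 0] d0 tt by auto
    with dnz[of x] that show False by auto
  qed
  define g where "g = (\<lambda>s. s * trace A - ln (d s))"
  define h where "h = (\<lambda>s. real CARD('n) * (- ln (1 - s * L) - s * L))"
  have derivs: "\<exists>g' h'. (g has_real_derivative g') (at t) \<and> (h has_real_derivative h') (at t) \<and> \<bar>g'\<bar> \<le> h'"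
    if t: "t \<in> {0..1}" for t
  proof -
    obtain N where N: "(mat 1 + t *\<^sub>R A) ** N = mat 1"
      and dN: "(d has_real_derivative det (mat 1 + t *\<^sub>R A) * trace (N ** A)) (at t)"
      using dd[OF t] by blast
    have dt: "d t = det (mat 1 + t *\<^sub>R A)" unfolding d_def ..
    have tL: "t * L < 1" using tl[OF t] t by simp
    have gd: "(g has_real_derivative trace A - trace (N ** A)) (at t)"
    proof -
      have "((\<lambda>s. ln (d s)) has_real_derivative 1 / d t * (det (mat 1 + t *\<^sub>R A) * trace (N ** A))) (at t)"
        by (rule DERIV_chain2[OF DERIV_ln_divide[OF dpos[OF t]] dN])
      then have "((\<lambda>s. ln (d s)) has_real_derivative trace (N ** A)) (at t)"
        using dpos[OF t] dt by simp
      then have "((\<lambda>s. s * trace A - ln (d s)) has_real_derivative 1 * trace A - trace (N ** A)) (at t)"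
        by (intro DERIV_diff DERIV_cmult_right DERIV_ident)
      then show ?thesis unfolding g_def by simp
    qed
    have hd: "(h has_real_derivative real CARD('n) * (t * L^2 / (1 - t * L))) (at t)"
    proof -
      have pos: "0 < 1 - t * L" using tL by simp
      have "((\<lambda>s. real CARD('n) * (- ln (1 - s * L) - s * L)) has_real_derivative
          real CARD('n) * (- (1 / (1 - t * L) * (0 - 1 * L)) - 1 * L)) (at t)"
      proof -
        have inner: "((\<lambda>s. 1 - s * L) has_real_derivative (0 - 1 * L)) (at t)"
          by (intro DERIV_diff DERIV_const DERIV_cmult_right DERIV_ident)
        have lnd: "((\<lambda>s. ln (1 - s * L)) has_real_derivative 1 / (1 - t * L) * (0 - 1 * L)) (at t)"
          by (rule DERIV_chain2[where g="\<lambda>s. 1 - s * L", OF _ inner]) (use DERIV_ln_divide[OF pos] in simp)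
        show ?thesis
          by (intro DERIV_cmult DERIV_diff DERIV_minus lnd DERIV_cmult_right DERIV_ident)
      qed
      moreover have "- (1 / (1 - t * L) * (0 - 1 * L)) - 1 * L = t * L^2 / (1 - t * L)"
        using pos by (simp add: field_simps power2_eq_square)
      ultimately show ?thesis unfolding h_def by simp
    qed
    have "\<bar>trace A - trace (N ** A)\<bar> \<le> real CARD('n) * (t * L^2 / (1 - t * L))"
      by (rule trace_diff_bound[OF bnd L0 _ tL refl N]) (use t in simp)
    with gd hd show ?thesis by blast
  qed
  have up: "h 0 - g 0 \<le> h 1 - g 1"
  proof (rule DERIV_nonneg_imp_nondecreasing[of 0 1 "\<lambda>s. h s - g s"])
    fix x :: real assume x: "0 \<le> x" "x \<le> 1"
    obtain g' h' where "(g has_real_derivative g') (at x)" "(h has_real_derivative h') (at x)" "\<bar>g'\<bar> \<le> h'"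
      using derivs[of x] x by auto
    then show "\<exists>y. ((\<lambda>s. h s - g s) has_real_derivative y) (at x) \<and> 0 \<le> y"
      by (intro exI[of _ "h' - g'"]) (auto intro!: DERIV_diff)
  qed simp
  have lo: "h 0 + g 0 \<le> h 1 + g 1"
  proof (rule DERIV_nonneg_imp_nondecreasing[of 0 1 "\<lambda>s. h s + g s"])
    fix x :: real assume x: "0 \<le> x" "x \<le> 1"
    obtain g' h' where "(g has_real_derivative g') (at x)" "(h has_real_derivative h') (at x)" "\<bar>g'\<bar> \<le> h'"
      using derivs[of x] x by auto
    then show "\<exists>y. ((\<lambda>s. h s + g s) has_real_derivative y) (at x) \<and> 0 \<le> y"
      by (intro exI[of _ "h' + g'"]) (auto intro!: DERIV_add)
  qed simp
  have g0: "g 0 = 0" unfolding g_def using d0 by simp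
  have h0: "h 0 = 0" unfolding h_def by simp
  have g1: "g 1 = trace A - ln \<bar>det (mat 1 + A)\<bar>"
    using dpos[of 1] unfolding g_def d_def by simp
  have h1: "h 1 = real CARD('n) * (- ln (1 - L) - L)" unfolding h_def by simp
  show ?thesis using up lo g0 h0 g1 h1 by linarith
qed

end
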